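(* Let $h\ge0$, let $z\in\mathcal{Q}\cap L^\infty$ and $q\in L^\infty$. Then $$\big(\mathcal{F}_h'(z)[q]\big)^2\le|\Omega|\,\nu\,\mathcal{F}_h''(z)[q^2].$$
   Context: $\Omega\subset\mathbb{R}^d$ bounded open domain, $|\Omega|$ its measure. $Q=\{(q,s)\in\mathbb{R}^d\times\mathbb{R}:s\ge\Lambda(q)\}$ with $\Lambda$ convex continuous, and $\mathcal{Q}$ the set of functions with values in $Q$ (at which $F$ is finite). $F$ is a $\nu$-self-concordant barrier for $Q$: $|F'''(z)[u^3]|\le2(F''(z)[u^2])^{3/2}$ and $|F'(z)[u]|\le\sqrt\nu(F''(z)[u^2])^{1/2}$. For $h>0$, $\int_\Omega^{(h)}\eta=\sum_{K\in T_h}\sum_k\omega_{K,k}\eta|_K(x_{K,k})$ is a quadrature rule on a triangulation $T_h$ of $\Omega$ with positive weights, integrating constants exactly; $\int^{(0)}$ is the exact integral. $\mathcal{F}_h(w)=\int_\Omega^{(h)}F(w(x))$, with derivatives $\mathcal{F}_h'(z)[q]=\int_\Omega^{(h)}F'(z)[q]$, $\mathcal{F}_h''(z)[q^2]=\int_\Omega^{(h)}F''(z)[q^2]$. *)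

theory Defs
  imports "HOL-Analysis.Analysis"
begin

type_synonym 'd state = "(real^('d::finite)) \<times> real"

definition epiQ :: "(real^('d::finite) \<Rightarrow> real) \<Rightarrow> ('d::finite) state set" where
  "epiQ Lam = {(q, s). s \<ge> Lam q}"

definition dd :: "(('d::finite) state \<Rightarrow> real) \<Rightarrow> ('d::finite) state \<Rightarrow> ('d::finite) state \<Rightarrow> nat \<Rightarrow> real" where
  "dd F z u k = (deriv ^^ k) (\<lambda>t. F (z + t *\<^sub>R u)) 0"

definition sc_barrier :: "('d::finite) state set \<Rightarrow> (('d::finite) state \<Rightarrow> real) \<Rightarrow> real \<Rightarrow> bool" where
  "sc_barrier Q F \<nu> \<longleftrightarrow>
     (\<forall>z\<in>interior Q. \<forall>u. \<forall>k<3. \<forall>\<^sub>F t in nhds 0.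
         (deriv ^^ k) (\<lambda>t. F (z + t *\<^sub>R u)) differentiable (at t)) \<and>
     convex_on (interior Q) F \<and>
     (\<forall>x\<in>frontier Q. filterlim F at_top (at x within interior Q)) \<and>
     (\<forall>z\<in>interior Q. \<forall>u. \<bar>dd F z u 3\<bar> \<le> 2 * (dd F z u 2) powr (3/2)) \<and>
     (\<forall>z\<in>interior Q. \<forall>u. \<bar>dd F z u 1\<bar> \<le> sqrt \<nu> * sqrt (dd F z u 2))"

definition is_simplex :: "(real^('d::finite)) set \<Rightarrow> bool" where
  "is_simplex K \<longleftrightarrow> (\<exists>S. finite S \<and> card S = CARD('d) + 1 \<and> \<not> affine_dependent S \<and> K = convex hull S)"

definition triangulation :: "(real^('d::finite)) set \<Rightarrow> (real^('d::finite)) set set \<Rightarrow> bool" where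
  "triangulation \<Omega> T \<longleftrightarrow> finite T \<and> (\<forall>K\<in>T. is_simplex K) \<and> \<Union>T = closure \<Omega> \<and>
     (\<forall>K1\<in>T. \<forall>K2\<in>T. K1 \<noteq> K2 \<longrightarrow> interior K1 \<inter> interior K2 = {})"

definition quad_rule :: "(real^('d::finite)) set \<Rightarrow> (real^('d::finite)) set set \<Rightarrow> ((real^('d::finite)) set \<Rightarrow> nat set)
     \<Rightarrow> ((real^('d::finite)) set \<Rightarrow> nat \<Rightarrow> real^'d) \<Rightarrow> ((real^('d::finite)) set \<Rightarrow> nat \<Rightarrow> real) \<Rightarrow> bool" where
  "quad_rule \<Omega> T I xq w \<longleftrightarrow> triangulation \<Omega> T \<and>
     (\<forall>K\<in>T. finite (I K) \<and> (\<forall>k\<in>I K. xq K k \<in> K \<and> w K k > 0)) \<and>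
     (\<Sum>K\<in>T. \<Sum>k\<in>I K. w K k) = measure lebesgue \<Omega>"

definition qint :: "(real^('d::finite)) set \<Rightarrow> (real \<Rightarrow> (real^('d::finite)) set set) \<Rightarrow> (real \<Rightarrow> (real^('d::finite)) set \<Rightarrow> nat set)
     \<Rightarrow> (real \<Rightarrow> (real^('d::finite)) set \<Rightarrow> nat \<Rightarrow> real^'d) \<Rightarrow> (real \<Rightarrow> (real^('d::finite)) set \<Rightarrow> nat \<Rightarrow> real)
     \<Rightarrow> real \<Rightarrow> (real^('d::finite) \<Rightarrow> real) \<Rightarrow> real" where
  "qint \<Omega> T I xq w h \<eta> = (if h = 0 then (LINT x : \<Omega> | lebesgue. \<eta> x)
     else (\<Sum>K\<in>T h. \<Sum>k\<in>I h K. w h K k * \<eta> (xq h K k)))"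

text \<open>Same, for nonnegative integrands, with values in [0,\<infinity>] (so that a divergent
  exact integral is +\<infinity> rather than a junk value).\<close>
definition qint_nn :: "(real^('d::finite)) set \<Rightarrow> (real \<Rightarrow> (real^('d::finite)) set set) \<Rightarrow> (real \<Rightarrow> (real^('d::finite)) set \<Rightarrow> nat set)
     \<Rightarrow> (real \<Rightarrow> (real^('d::finite)) set \<Rightarrow> nat \<Rightarrow> real^'d) \<Rightarrow> (real \<Rightarrow> (real^('d::finite)) set \<Rightarrow> nat \<Rightarrow> real)
     \<Rightarrow> real \<Rightarrow> (real^('d::finite) \<Rightarrow> real) \<Rightarrow> ennreal" where
  "qint_nn \<Omega> T I xq w h \<eta> = (if h = 0 then (\<integral>\<^sup>+ x \<in> \<Omega>. ennreal (\<eta> x) \<partial>lebesgue)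
     else ennreal (\<Sum>K\<in>T h. \<Sum>k\<in>I h K. w h K k * \<eta> (xq h K k)))"

end

theory Submission
  imports Defs
begin
lemma dd2_nonneg:
  fixes F :: "'d::finite state \<Rightarrow> real"
  assumes sc: "sc_barrier Q F \<nu>" and zQ: "z \<in> interior Q"
  shows "dd F z u 2 \<ge> 0"
proof (rule ccontr)
  assume neg: "\<not> dd F z u 2 \<ge> 0"
  define g where "g = (\<lambda>t. F (z + t *\<^sub>R u))"
  have H: "\<forall>k<3. \<forall>\<^sub>F t in nhds 0. (deriv ^^ k) g differentiable (at t)"
    using sc zQ unfolding sc_barrier_def g_def by blast
  have ev0: "\<forall>\<^sub>F t in nhds 0. g differentiable (at t)"
    using H[rule_format, of 0] by simp
  have ev1: "\<forall>\<^sub>F t in nhds 0. deriv g differentiable (at t)"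
    using H[rule_format, of 1] by simp
  have op: "open ((\<lambda>t::real. z + t *\<^sub>R u) -` interior Q)"
    by (intro continuous_open_vimage) (auto intro!: continuous_intros)
  have ev2: "\<forall>\<^sub>F t in nhds 0. z + t *\<^sub>R u \<in> interior Q"
    using eventually_nhds_in_open[OF op] zQ by simp
  obtain d where d: "d > 0" and dP: "\<And>t. dist t 0 < d \<Longrightarrow> g differentiable (at t) \<and>
      deriv g differentiable (at t) \<and> z + t *\<^sub>R u \<in> interior Q"
    using eventually_conj[OF ev0 eventually_conj[OF ev1 ev2]] unfolding eventually_nhds_metric by blast
  have dd2: "dd F z u 2 = deriv (deriv g) 0"
    unfolding dd_def g_def by (simp add: numeral_2_eq_2)
  have D2: "DERIV (deriv g) 0 :> dd F z u 2"
    using dP[of 0] d dd2 DERIV_deriv_iff_real_differentiable by auto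
  obtain d1 where d1: "d1 > 0" "\<And>h. h > 0 \<Longrightarrow> h < d1 \<Longrightarrow> deriv g 0 > deriv g (0 + h)"
    using DERIV_neg_dec_right[OF D2] neg by force
  obtain d2 where d2: "d2 > 0" "\<And>h. h > 0 \<Longrightarrow> h < d2 \<Longrightarrow> deriv g 0 < deriv g (0 - h)"
    using DERIV_neg_dec_left[OF D2] neg by force
  define h where "h = min d (min d1 d2) / 2"
  have h: "h > 0" "h < d" "h < d1" "h < d2" using d d1 d2 by (auto simp: h_def)
  have Dg: "DERIV g x :> deriv g x" if "-h \<le> x" "x \<le> h" for x
    using dP[of x] that h DERIV_deriv_iff_real_differentiable by auto
  obtain x1 where x1: "0 < x1" "x1 < h" "g h - g 0 = (h - 0) * deriv g x1"
    using MVT2[of 0 h g "deriv g"] Dg h by auto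
  obtain x2 where x2: "-h < x2" "x2 < 0" "g 0 - g (-h) = (0 - (-h)) * deriv g x2"
    using MVT2[of "-h" 0 g "deriv g"] Dg h by auto
  have "deriv g x1 < deriv g 0" using d1(2)[of x1] x1 h by auto
  moreover have "deriv g 0 < deriv g x2" using d2(2)[of "-x2"] x2 h by auto
  ultimately have lt: "g h - g 0 < g 0 - g (-h)" using x1 x2 h
    by (metis diff_0_right diff_minus_eq_add minus_diff_eq mult_less_cancel_left_pos order.strict_trans)
  have cv: "convex_on (interior Q) F" using sc unfolding sc_barrier_def by blast
  have "F ((1 - 1/2) *\<^sub>R (z + h *\<^sub>R u) + (1/2) *\<^sub>R (z + (-h) *\<^sub>R u))
      \<le> (1 - 1/2) * F (z + h *\<^sub>R u) + (1/2) * F (z + (-h) *\<^sub>R u)"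
    by (rule convex_onD[OF cv]) (use dP[of h] dP[of "-h"] h in auto)
  moreover have "(1 - 1/2) *\<^sub>R (z + h *\<^sub>R u) + (1/2::real) *\<^sub>R (z + (-h) *\<^sub>R u) = z"
    by (simp add: algebra_simps) (metis scaleR_half_double scaleR_right_distrib)
  ultimately have "g 0 \<le> (g h + g (-h)) / 2" unfolding g_def by simp
  with lt show False by simp
qed

lemma dd_pointwise:
  fixes F :: "'d::finite state \<Rightarrow> real"
  assumes sc: "sc_barrier Q F \<nu>" and zQ: "z \<in> interior Q"
  shows "(dd F z u 1)\<^sup>2 \<le> \<nu> * dd F z u 2" "0 \<le> dd F z u 2" "\<nu> \<le> 0 \<Longrightarrow> dd F z u 1 = 0"
proof -
  show b: "0 \<le> dd F z u 2" by (rule dd2_nonneg[OF sc zQ])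
  have "\<bar>dd F z u 1\<bar> \<le> sqrt \<nu> * sqrt (dd F z u 2)"
    using sc zQ unfolding sc_barrier_def by blast
  hence le: "\<bar>dd F z u 1\<bar> \<le> sqrt (\<nu> * dd F z u 2)" by (simp add: real_sqrt_mult)
  hence nn: "\<nu> * dd F z u 2 \<ge> 0"
    by (metis abs_ge_zero order_trans real_sqrt_ge_0_iff)
  have "\<bar>dd F z u 1\<bar>\<^sup>2 \<le> (sqrt (\<nu> * dd F z u 2))\<^sup>2"
    using le by (intro power_mono) auto
  thus sq: "(dd F z u 1)\<^sup>2 \<le> \<nu> * dd F z u 2" using nn by simp
  assume "\<nu> \<le> 0"
  hence "\<nu> * dd F z u 2 \<le> 0" using b by (simp add: mult_nonpos_nonneg)
  with sq have "(dd F z u 1)\<^sup>2 \<le> 0" by linarith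
  thus "dd F z u 1 = 0" by simp
qed

lemma weighted_cs:
  fixes W A :: "'a \<Rightarrow> real"
  assumes "\<And>i. i \<in> S \<Longrightarrow> W i \<ge> 0"
  shows "(\<Sum>i\<in>S. W i * A i)\<^sup>2 \<le> (\<Sum>i\<in>S. W i) * (\<Sum>i\<in>S. W i * (A i)\<^sup>2)"
proof -
  have "(\<Sum>i\<in>S. sqrt (W i) * (sqrt (W i) * A i))\<^sup>2
     \<le> (\<Sum>i\<in>S. (sqrt (W i))\<^sup>2) * (\<Sum>i\<in>S. (sqrt (W i) * A i)\<^sup>2)"
    by (rule Cauchy_Schwarz_ineq_sum)
  also have "(\<Sum>i\<in>S. sqrt (W i) * (sqrt (W i) * A i)) = (\<Sum>i\<in>S. W i * A i)"
    using assms by (intro sum.cong) (auto simp flip: mult.assoc)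
  also have "(\<Sum>i\<in>S. (sqrt (W i))\<^sup>2) = (\<Sum>i\<in>S. W i)"
    using assms by (intro sum.cong) auto
  also have "(\<Sum>i\<in>S. (sqrt (W i) * A i)\<^sup>2) = (\<Sum>i\<in>S. W i * (A i)\<^sup>2)"
    using assms by (intro sum.cong) (auto simp: power_mult_distrib)
  finally show ?thesis .
qed

theorem mainTheorem4:
  fixes \<Omega> :: "(real^'d) set" and Lam :: "real^'d \<Rightarrow> real"
    and F :: "'d state \<Rightarrow> real" and \<nu> :: real
    and T :: "real \<Rightarrow> (real^'d) set set" and I :: "real \<Rightarrow> (real^'d) set \<Rightarrow> nat set"
    and xq :: "real \<Rightarrow> (real^'d) set \<Rightarrow> nat \<Rightarrow> real^'d"
    and w :: "real \<Rightarrow> (real^'d) set \<Rightarrow> nat \<Rightarrow> real"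
    and h :: real and z q :: "real^'d \<Rightarrow> 'd state"
  assumes "open \<Omega>" and "bounded \<Omega>"
    and "convex_on UNIV Lam" and "continuous_on UNIV Lam"
    and "sc_barrier (epiQ Lam) F \<nu>"
    and "\<And>h'. h' > 0 \<Longrightarrow> quad_rule \<Omega> (T h') (I h') (xq h') (w h')"
    and "h \<ge> 0"
    and "\<forall>x\<in>\<Omega>. z x \<in> interior (epiQ Lam)"
    and "h > 0 \<Longrightarrow> \<forall>K\<in>T h. \<forall>k\<in>I h K. z (xq h K k) \<in> interior (epiQ Lam)"
    and "z \<in> borel_measurable lebesgue" and "\<exists>C. AE x in lebesgue. x \<in> \<Omega> \<longrightarrow> norm (z x) \<le> C"
    and "q \<in> borel_measurable lebesgue" and "\<exists>C. AE x in lebesgue. x \<in> \<Omega> \<longrightarrow> norm (q x) \<le> C"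
  shows "ennreal ((qint \<Omega> T I xq w h (\<lambda>x. dd F (z x) (q x) 1))\<^sup>2)
           \<le> ennreal (measure lebesgue \<Omega> * \<nu>) * qint_nn \<Omega> T I xq w h (\<lambda>x. dd F (z x) (q x) 2)"
proof -
  note sc = assms(5)
  define a where "a = (\<lambda>x. dd F (z x) (q x) 1)"
  define b where "b = (\<lambda>x. dd F (z x) (q x) 2)"
  show ?thesis
  proof (cases "h = 0")
    case False
    with assms(7) have hpos: "h > 0" by simp
    have qr: "quad_rule \<Omega> (T h) (I h) (xq h) (w h)" using assms(6) hpos by blast
    have finT: "finite (T h)" and finI: "\<And>K. K \<in> T h \<Longrightarrow> finite (I h K)"
      and wpos: "\<And>K k. K \<in> T h \<Longrightarrow> k \<in> I h K \<Longrightarrow> w h K k > 0"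
      and wsum: "(\<Sum>K\<in>T h. \<Sum>k\<in>I h K. w h K k) = measure lebesgue \<Omega>"
      using qr unfolding quad_rule_def triangulation_def by auto
    have zin: "\<And>K k. K \<in> T h \<Longrightarrow> k \<in> I h K \<Longrightarrow> z (xq h K k) \<in> interior (epiQ Lam)"
      using assms(9) hpos by blast
    define S where "S = Sigma (T h) (I h)"
    define W where "W = (\<lambda>p. w h (fst p) (snd p))"
    define A where "A = (\<lambda>p. a (xq h (fst p) (snd p)))"
    define B where "B = (\<lambda>p. b (xq h (fst p) (snd p)))"
    have Wpos: "\<And>p. p \<in> S \<Longrightarrow> W p > 0" using wpos by (auto simp: S_def W_def)
    have pw: "(A p)\<^sup>2 \<le> \<nu> * B p \<and> 0 \<le> B p \<and> (\<nu> \<le> 0 \<longrightarrow> A p = 0)" if pS: "p \<in> S" for p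
    proof -
      obtain K k where "p = (K,k)" "K \<in> T h" "k \<in> I h K" using pS unfolding S_def by blast
      thus ?thesis using dd_pointwise[OF sc zin, of K k "q (xq h K k)"] by (simp add: A_def B_def a_def b_def)
    qed
    have eq1: "qint \<Omega> T I xq w h (\<lambda>x. dd F (z x) (q x) 1) = (\<Sum>p\<in>S. W p * A p)"
      unfolding qint_def S_def W_def A_def a_def using False finT finI
      by (simp add: sum.Sigma split_beta)
    have eq2: "qint_nn \<Omega> T I xq w h (\<lambda>x. dd F (z x) (q x) 2) = ennreal (\<Sum>p\<in>S. W p * B p)"
      unfolding qint_nn_def S_def W_def B_def b_def using False finT finI
      by (simp add: sum.Sigma split_beta)
    have eq3: "(\<Sum>p\<in>S. W p) = measure lebesgue \<Omega>"
      unfolding S_def W_def using wsum finT finI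
      by (simp add: sum.Sigma split_beta)
    show ?thesis
    proof (cases "\<nu> \<le> 0")
      case True
      hence "(\<Sum>p\<in>S. W p * A p) = 0" using pw by (intro sum.neutral) auto
      thus ?thesis unfolding eq1 by simp
    next
      case nu: False
      have "(\<Sum>p\<in>S. W p * A p)\<^sup>2 \<le> (\<Sum>p\<in>S. W p) * (\<Sum>p\<in>S. W p * (A p)\<^sup>2)"
        using Wpos by (intro weighted_cs) (auto intro: less_imp_le)
      also have "\<dots> \<le> measure lebesgue \<Omega> * (\<nu> * (\<Sum>p\<in>S. W p * B p))"
        unfolding eq3 sum_distrib_left
        by (intro mult_left_mono sum_mono) (use pw Wpos in \<open>auto intro!: mult_left_mono simp: algebra_simps\<close>)
      finally have le: "(\<Sum>p\<in>S. W p * A p)\<^sup>2 \<le> measure lebesgue \<Omega> * \<nu> * (\<Sum>p\<in>S. W p * B p)"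
        by (simp add: mult.assoc)
      have "0 \<le> (\<Sum>p\<in>S. W p * B p)" 
      proof (intro sum_nonneg)
        fix p assume "p \<in> S"
        thus "0 \<le> W p * B p" using pw[OF \<open>p \<in> S\<close>] Wpos[OF \<open>p \<in> S\<close>] by simp
      qed
      hence "ennreal (measure lebesgue \<Omega> * \<nu>) * ennreal (\<Sum>p\<in>S. W p * B p)
           = ennreal (measure lebesgue \<Omega> * \<nu> * (\<Sum>p\<in>S. W p * B p))"
        using nu by (simp add: ennreal_mult)
      thus ?thesis unfolding eq1 eq2 using le by (simp add: ennreal_leI)
    qed
  next
    case True
    define f where "f = (\<lambda>x. indicator \<Omega> x * a x)"
    have eq1: "qint \<Omega> T I xq w h (\<lambda>x. dd F (z x) (q x) 1) = integral\<^sup>L lebesgue f"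
      unfolding qint_def f_def a_def set_lebesgue_integral_def using True by simp
    have eq2: "qint_nn \<Omega> T I xq w h (\<lambda>x. dd F (z x) (q x) 2)
        = (\<integral>\<^sup>+ x. ennreal (b x) * indicator \<Omega> x \<partial>lebesgue)"
      unfolding qint_nn_def b_def using True by simp
    have pw: "(a x)\<^sup>2 \<le> \<nu> * b x \<and> 0 \<le> b x \<and> (\<nu> \<le> 0 \<longrightarrow> a x = 0)" if "x \<in> \<Omega>" for x
      using dd_pointwise[OF sc, of "z x" "q x"] assms(8) that by (simp add: a_def b_def)
    have Om: "\<Omega> \<in> lmeasurable" using assms(1,2) by (simp add: lmeasurable_open)
    show ?thesis
    proof (cases "integrable lebesgue f \<and> \<nu> > 0")
      case False
      have "integral\<^sup>L lebesgue f = 0"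
      proof (cases "integrable lebesgue f")
        case False thus ?thesis by (simp add: not_integrable_integral_eq)
      next
        case True
        with \<open>\<not> (integrable lebesgue f \<and> \<nu> > 0)\<close> have "\<nu> \<le> 0" by simp
        hence "f = (\<lambda>x. 0)" using pw by (auto simp: f_def indicator_def fun_eq_iff)
        thus ?thesis by simp
      qed
      thus ?thesis unfolding eq1 by simp
    next
      case ok: True
      hence nu: "\<nu> > 0" and fi: "integrable lebesgue f" by auto
      have fm[measurable]: "f \<in> borel_measurable lebesgue" using fi by (rule borel_measurable_integrable)
      have Oms[measurable]: "\<Omega> \<in> sets lebesgue" using Om by (simp add: fmeasurableD)
      have "ennreal ((integral\<^sup>L lebesgue f)\<^sup>2) = (ennreal \<bar>integral\<^sup>L lebesgue f\<bar>)\<^sup>2"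
        by (simp add: ennreal_power)
      also have "\<dots> \<le> (\<integral>\<^sup>+ x. ennreal \<bar>f x\<bar> \<partial>lebesgue)\<^sup>2"
        using integral_norm_bound_ennreal[OF fi] by (intro power_mono) auto
      also have "(\<integral>\<^sup>+ x. ennreal \<bar>f x\<bar> \<partial>lebesgue) = (\<integral>\<^sup>+ x. ennreal \<bar>f x\<bar> * indicator \<Omega> x \<partial>lebesgue)"
        by (intro nn_integral_cong) (auto simp: f_def indicator_def)
      also have "(\<dots>)\<^sup>2 \<le> (\<integral>\<^sup>+ x. (ennreal \<bar>f x\<bar>)\<^sup>2 \<partial>lebesgue) * (\<integral>\<^sup>+ x. (indicator \<Omega> x)\<^sup>2 \<partial>lebesgue)"
        by (rule Cauchy_Schwarz_nn_integral) auto
      also have "(\<integral>\<^sup>+ x. (indicator \<Omega> x)\<^sup>2 \<partial>lebesgue) = (\<integral>\<^sup>+ x. indicator \<Omega> x \<partial>lebesgue)"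
        by (intro nn_integral_cong) (auto simp: indicator_def)
      also have "\<dots> = ennreal (measure lebesgue \<Omega>)"
        using Om by (simp add: emeasure_eq_measure2)
      also have "(\<integral>\<^sup>+ x. (ennreal \<bar>f x\<bar>)\<^sup>2 \<partial>lebesgue) = (\<integral>\<^sup>+ x. ennreal \<nu> * ennreal ((f x)\<^sup>2 / \<nu>) \<partial>lebesgue)"
        using nu by (intro nn_integral_cong) (simp add: ennreal_power flip: ennreal_mult)
      also have "\<dots> = ennreal \<nu> * (\<integral>\<^sup>+ x. ennreal ((f x)\<^sup>2 / \<nu>) \<partial>lebesgue)"
        by (rule nn_integral_cmult) measurable
      also have "ennreal \<nu> * (\<integral>\<^sup>+ x. ennreal ((f x)\<^sup>2 / \<nu>) \<partial>lebesgue) * ennreal (measure lebesgue \<Omega>) \<le> ennreal \<nu> * (\<integral>\<^sup>+ x. ennreal (b x) * indicator \<Omega> x \<partial>lebesgue) * ennreal (measure lebesgue \<Omega>)"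
      proof (intro mult_right_mono mult_left_mono)
        show "(\<integral>\<^sup>+ x. ennreal ((f x)\<^sup>2 / \<nu>) \<partial>lebesgue) \<le> (\<integral>\<^sup>+ x. ennreal (b x) * indicator \<Omega> x \<partial>lebesgue)"
      proof (intro nn_integral_mono)
        fix x
        show "ennreal ((f x)\<^sup>2 / \<nu>) \<le> ennreal (b x) * indicator \<Omega> x"
        proof (cases "x \<in> \<Omega>")
          case True
          hence "(f x)\<^sup>2 / \<nu> \<le> b x" using pw[OF True] nu by (simp add: f_def divide_le_eq mult.commute)
          thus ?thesis using True by (simp add: ennreal_leI)
        qed (simp add: f_def)
      qed
      qed auto
      also have "\<dots> = ennreal (measure lebesgue \<Omega> * \<nu>) * (\<integral>\<^sup>+ x. ennreal (b x) * indicator \<Omega> x \<partial>lebesgue)"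
        using nu by (simp add: ennreal_mult mult_ac)
      finally show ?thesis unfolding eq1 eq2 .
    qed
  qed
qed

end
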